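(* Let $(G,M,\Delta)$ be a Garside structure and $(H,N,\delta)$ a parabolic substructure with $H\ne\{1\}$. Let $\mathcal S=\mathrm{Div}(\Delta)\setminus\{1\}$ and let $d$ be the word metric on $G$ with respect to $\mathcal S$. Then $G$ has $5$-fellow projections on $H$ with respect to $\mathcal S$: for all $\alpha_1,\alpha_2\in G$ with $d(\alpha_1,\alpha_2)=1$ and every $\beta_1\in\pi_H(\alpha_1)$ there exists $\beta_2\in\pi_H(\alpha_2)$ with $d(\beta_1,\beta_2)\le 5$.
   Context: Let $G$ be a group and $M$ a submonoid with $M\cap M^{-1}=\{1\}$. Define $\alpha\le_L\beta$ iff $\alpha^{-1}\beta\in M$, and $\alpha\le_R\beta$ iff $\beta\alpha^{-1}\in M$. For $a\in M$ let $\mathrm{Div}_L(a)=\{b\in M: b\le_L a\}$, $\mathrm{Div}_R(a)=\{b\in M: b\le_R a\}$; $a$ is balanced if these coincide, and then $\mathrm{Div}(a)$ denotes this set. $M$ is Noetherian if each $a\in M$ admits an $n$ such that $a$ is not a product of more than $n$ non-trivial factors. A Garside structure $(G,M,\Delta)$: $\Delta\in M$ balanced, $M$ Noetherian, $\mathrm{Div}(\Delta)$ finite and generating $M$ as a monoid and $G$ as a group, $(G,\le_L)$ a lattice. A parabolic substructure $(H,N,\delta)$: $\delta\in M$ balanced, $H$ (resp. $N$) the subgroup (resp. submonoid) generated by $\mathrm{Div}(\delta)$, and $\mathrm{Div}(\delta)=\mathrm{Div}(\Delta)\cap N$. The word metric is $d(\alpha,\beta)=\lg(\alpha^{-1}\beta)$,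 with $\lg$ the word length with respect to $\mathcal S$; $d(\alpha,H)=\min_{\beta\in H}d(\alpha,\beta)$, and the projection of $\alpha$ on $H$ is $\pi_H(\alpha)=\{\beta\in H: d(\alpha,\beta)=d(\alpha,H)\}$. *)

theory Defs
  imports "HOL-Algebra.Algebra"
begin

definition lprod :: "('a, 'b) monoid_scheme \<Rightarrow> 'a list \<Rightarrow> 'a" where
  "lprod G xs = foldr (\<lambda>x y. x \<otimes>\<^bsub>G\<^esub> y) xs \<one>\<^bsub>G\<^esub>"

definition mon_gen :: "('a, 'b) monoid_scheme \<Rightarrow> 'a set \<Rightarrow> 'a set" where
  "mon_gen G A = {lprod G xs | xs. set xs \<subseteq> A}"

definition leL :: "('a, 'b) monoid_scheme \<Rightarrow> 'a set \<Rightarrow> 'a \<Rightarrow> 'a \<Rightarrow> bool" where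
  "leL G M a b \<longleftrightarrow> inv\<^bsub>G\<^esub> a \<otimes>\<^bsub>G\<^esub> b \<in> M"

definition leR :: "('a, 'b) monoid_scheme \<Rightarrow> 'a set \<Rightarrow> 'a \<Rightarrow> 'a \<Rightarrow> bool" where
  "leR G M a b \<longleftrightarrow> b \<otimes>\<^bsub>G\<^esub> inv\<^bsub>G\<^esub> a \<in> M"

definition DivL :: "('a, 'b) monoid_scheme \<Rightarrow> 'a set \<Rightarrow> 'a \<Rightarrow> 'a set" where
  "DivL G M a = {b \<in> M. leL G M b a}"

definition DivR :: "('a, 'b) monoid_scheme \<Rightarrow> 'a set \<Rightarrow> 'a \<Rightarrow> 'a set" where
  "DivR G M a = {b \<in> M. leR G M b a}"

definition balanced :: "('a, 'b) monoid_scheme \<Rightarrow> 'a set \<Rightarrow> 'a \<Rightarrow> bool" where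
  "balanced G M a \<longleftrightarrow> a \<in> M \<and> DivL G M a = DivR G M a"

(* Div(a) for balanced a *)
abbreviation Div :: "('a, 'b) monoid_scheme \<Rightarrow> 'a set \<Rightarrow> 'a \<Rightarrow> 'a set" where
  "Div G M a \<equiv> DivL G M a"

definition pointed_submonoid :: "('a, 'b) monoid_scheme \<Rightarrow> 'a set \<Rightarrow> bool" where
  "pointed_submonoid G M \<longleftrightarrow> M \<subseteq> carrier G \<and> \<one>\<^bsub>G\<^esub> \<in> M
     \<and> (\<forall>x\<in>M. \<forall>y\<in>M. x \<otimes>\<^bsub>G\<^esub> y \<in> M)
     \<and> M \<inter> (\<lambda>x. inv\<^bsub>G\<^esub> x) ` M = {\<one>\<^bsub>G\<^esub>}"

definition noetherian :: "('a, 'b) monoid_scheme \<Rightarrow> 'a set \<Rightarrow> bool" where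
  "noetherian G M \<longleftrightarrow> (\<forall>a\<in>M. \<exists>n::nat. \<forall>xs. set xs \<subseteq> M - {\<one>\<^bsub>G\<^esub>} \<and> lprod G xs = a
       \<longrightarrow> length xs \<le> n)"

definition leL_lattice :: "('a, 'b) monoid_scheme \<Rightarrow> 'a set \<Rightarrow> bool" where
  "leL_lattice G M \<longleftrightarrow> (\<forall>a\<in>carrier G. \<forall>b\<in>carrier G.
     (\<exists>m\<in>carrier G. leL G M m a \<and> leL G M m b \<and>
        (\<forall>c\<in>carrier G. leL G M c a \<and> leL G M c b \<longrightarrow> leL G M c m)) \<and>
     (\<exists>j\<in>carrier G. leL G M a j \<and> leL G M b j \<and>
        (\<forall>c\<in>carrier G. leL G M a c \<and> leL G M b c \<longrightarrow> leL G M j c)))"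

definition garside_structure :: "('a, 'b) monoid_scheme \<Rightarrow> 'a set \<Rightarrow> 'a \<Rightarrow> bool" where
  "garside_structure G M \<Delta> \<longleftrightarrow> group G \<and> pointed_submonoid G M \<and>
     balanced G M \<Delta> \<and> noetherian G M \<and> finite (Div G M \<Delta>) \<and>
     mon_gen G (Div G M \<Delta>) = M \<and> generate G (Div G M \<Delta>) = carrier G \<and>
     leL_lattice G M"

definition parabolic_substructure ::
  "('a, 'b) monoid_scheme \<Rightarrow> 'a set \<Rightarrow> 'a \<Rightarrow> 'a set \<Rightarrow> 'a set \<Rightarrow> 'a \<Rightarrow> bool" where
  "parabolic_substructure G M \<Delta> H N \<delta> \<longleftrightarrow> balanced G M \<delta> \<and>
     H = generate G (Div G M \<delta>) \<and> N = mon_gen G (Div G M \<delta>) \<and>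
     Div G M \<delta> = Div G M \<Delta> \<inter> N"

definition wlen :: "('a, 'b) monoid_scheme \<Rightarrow> 'a set \<Rightarrow> 'a \<Rightarrow> nat" where
  "wlen G S x = (LEAST n. \<exists>xs. length xs = n \<and>
      set xs \<subseteq> S \<union> (\<lambda>s. inv\<^bsub>G\<^esub> s) ` S \<and> lprod G xs = x)"

definition wdist :: "('a, 'b) monoid_scheme \<Rightarrow> 'a set \<Rightarrow> 'a \<Rightarrow> 'a \<Rightarrow> nat" where
  "wdist G S a b = wlen G S (inv\<^bsub>G\<^esub> a \<otimes>\<^bsub>G\<^esub> b)"

definition setdist :: "('a, 'b) monoid_scheme \<Rightarrow> 'a set \<Rightarrow> 'a \<Rightarrow> 'a set \<Rightarrow> nat" where
  "setdist G S a H = (LEAST n. \<exists>b\<in>H. wdist G S a b = n)"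

definition proj :: "('a, 'b) monoid_scheme \<Rightarrow> 'a set \<Rightarrow> 'a set \<Rightarrow> 'a \<Rightarrow> 'a set" where
  "proj G S H a = {b \<in> H. wdist G S a b = setdist G S a H}"

end

theory Submission
  imports Defs
begin

locale gctx = group G for G :: "('a,'b) monoid_scheme" (structure) +
  fixes M :: "'a set" and Dl :: 'a and H N :: "'a set" and dl :: 'a
  assumes ptd: "pointed_submonoid G M" and balD: "balanced G M Dl"
    and genM: "mon_gen G (Div G M Dl) = M" and genG: "generate G (Div G M Dl) = carrier G"
    and lat: "leL_lattice G M" and bald: "balanced G M dl"
    and Hdef: "H = generate G (Div G M dl)" and Ndef: "N = mon_gen G (Div G M dl)"
    and Ddef: "Div G M dl = Div G M Dl \<inter> N"
begin

abbreviation le where "le x y \<equiv> leL G M x y"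

lemma M_sub: "M \<subseteq> carrier G" using ptd unfolding pointed_submonoid_def by auto
lemma M_one: "\<one> \<in> M" using ptd unfolding pointed_submonoid_def by auto
lemma M_mult: "x \<in> M \<Longrightarrow> y \<in> M \<Longrightarrow> x \<otimes> y \<in> M" using ptd unfolding pointed_submonoid_def by auto
lemma M_car: "x \<in> M \<Longrightarrow> x \<in> carrier G" using M_sub by auto
lemma M_pt: assumes "x \<in> M" "inv x \<in> M" shows "x = \<one>"
proof -
  have "x \<in> (\<lambda>x. inv x) ` M" using assms M_car by (intro image_eqI[of _ _ "inv x"]) auto
  then show ?thesis using assms ptd unfolding pointed_submonoid_def by auto
qed

lemma canc1[simp]: "y \<in> carrier G \<Longrightarrow> z \<in> carrier G \<Longrightarrow> y \<otimes> (inv y \<otimes> z) = z"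
  by (simp add: m_assoc[symmetric])
lemma canc2[simp]: "y \<in> carrier G \<Longrightarrow> z \<in> carrier G \<Longrightarrow> inv y \<otimes> (y \<otimes> z) = z"
  by (simp add: m_assoc[symmetric])

lemma le_def': "le x y \<longleftrightarrow> inv x \<otimes> y \<in> M" by (simp add: leL_def)
lemma le_refl: "x \<in> carrier G \<Longrightarrow> le x x" by (simp add: le_def' M_one)
lemma le_trans: assumes "le x y" "le y z" "x \<in> carrier G" "y \<in> carrier G" "z \<in> carrier G" shows "le x z"
proof -
  have "inv x \<otimes> z = (inv x \<otimes> y) \<otimes> (inv y \<otimes> z)" using assms by (simp add: m_assoc)
  then show ?thesis using assms M_mult by (simp add: le_def')
qed
lemma le_antisym: assumes "le x y" "le y x" "x \<in> carrier G" "y \<in> carrier G" shows "x = y"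
proof -
  have "inv (inv x \<otimes> y) = inv y \<otimes> x" using assms by (simp add: inv_mult_group)
  then have "inv x \<otimes> y = \<one>" using M_pt assms by (simp add: le_def')
  then show ?thesis using assms by (metis inv_comm inv_equality inv_inv inv_closed)
qed
lemma le_left: assumes "x \<in> carrier G" "y \<in> carrier G" "z \<in> carrier G"
  shows "le (z \<otimes> x) (z \<otimes> y) \<longleftrightarrow> le x y"
proof -
  have "inv (z \<otimes> x) \<otimes> (z \<otimes> y) = inv x \<otimes> y" using assms
    by (simp add: inv_mult_group m_assoc[symmetric]) (simp add: m_assoc)
  then show ?thesis by (simp add: le_def')
qed
lemma le_one_iff: "m \<in> carrier G \<Longrightarrow> le \<one> m \<longleftrightarrow> m \<in> M" by (simp add: le_def')
lemma le_one_iff2: "m \<in> carrier G \<Longrightarrow> le m \<one> \<longleftrightarrow> inv m \<in> M" by (simp add: le_def')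


lemma le_carr_M: "x \<in> carrier G \<Longrightarrow> y \<in> carrier G \<Longrightarrow> le x y \<Longrightarrow> inv x \<otimes> y \<in> M" by (simp add: le_def')

lemma lprod_Nil[simp]: "lprod G [] = \<one>" by (simp add: lprod_def)
lemma lprod_Cons[simp]: "lprod G (x # xs) = x \<otimes> lprod G xs" by (simp add: lprod_def)
lemma lprod_closed[simp]: "set xs \<subseteq> carrier G \<Longrightarrow> lprod G xs \<in> carrier G"
  by (induction xs) auto
lemma lprod_append: "set xs \<subseteq> carrier G \<Longrightarrow> set ys \<subseteq> carrier G \<Longrightarrow> lprod G (xs @ ys) = lprod G xs \<otimes> lprod G ys"
  by (induction xs) (auto simp: m_assoc)
lemma lprod_M: "set xs \<subseteq> M \<Longrightarrow> lprod G xs \<in> M"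
  by (induction xs) (auto simp: M_one M_mult)

lemma mon_gen_mult: assumes "A \<subseteq> carrier G" "x \<in> mon_gen G A" "y \<in> mon_gen G A" shows "x \<otimes> y \<in> mon_gen G A"
proof -
  obtain xs ys where "x = lprod G xs" "set xs \<subseteq> A" "y = lprod G ys" "set ys \<subseteq> A" using assms by (auto simp: mon_gen_def)
  then show ?thesis using assms by (auto simp: mon_gen_def lprod_append intro!: exI[of _ "xs @ ys"])
qed
lemma mon_gen_incl: "A \<subseteq> carrier G \<Longrightarrow> a \<in> A \<Longrightarrow> a \<in> mon_gen G A"
  unfolding mon_gen_def by (auto intro!: exI[of _ "[a]"])
lemma mon_gen_one: "\<one> \<in> mon_gen G A"
  unfolding mon_gen_def by (auto intro!: exI[of _ "[]"])
lemma mon_gen_sub: "A \<subseteq> carrier G \<Longrightarrow> mon_gen G A \<subseteq> carrier G"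
  unfolding mon_gen_def by auto
lemma mon_gen_induct[consumes 2, case_names one mult]:
  assumes "A \<subseteq> carrier G" "x \<in> mon_gen G A" "P \<one>"
    "\<And>a y. a \<in> A \<Longrightarrow> y \<in> mon_gen G A \<Longrightarrow> P y \<Longrightarrow> P (a \<otimes> y)"
  shows "P x"
proof -
  obtain xs where x: "x = lprod G xs" "set xs \<subseteq> A" using assms by (auto simp: mon_gen_def)
  have "P (lprod G xs)" using x(2)
  proof (induction xs)
    case Nil then show ?case using assms by simp
  next
    case (Cons a xs)
    then have "lprod G xs \<in> mon_gen G A" by (auto simp: mon_gen_def)
    then show ?case using Cons assms by auto
  qed
  then show ?thesis using x by simp
qed

definition meet where "meet a b = (SOME m. m \<in> carrier G \<and> le m a \<and> le m b \<and> (\<forall>c\<in>carrier G. le c a \<and> le c b \<longrightarrow> le c m))"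
definition join where "join a b = (SOME j. j \<in> carrier G \<and> le a j \<and> le b j \<and> (\<forall>c\<in>carrier G. le a c \<and> le b c \<longrightarrow> le j c))"

lemma meet_props: assumes "a \<in> carrier G" "b \<in> carrier G"
  shows "meet a b \<in> carrier G \<and> le (meet a b) a \<and> le (meet a b) b \<and> (\<forall>c\<in>carrier G. le c a \<and> le c b \<longrightarrow> le c (meet a b))"
proof -
  have "\<exists>m. m \<in> carrier G \<and> le m a \<and> le m b \<and> (\<forall>c\<in>carrier G. le c a \<and> le c b \<longrightarrow> le c m)"
    using lat assms unfolding leL_lattice_def by blast
  then show ?thesis unfolding meet_def by (rule someI_ex)
qed
lemma join_props: assumes "a \<in> carrier G" "b \<in> carrier G"
  shows "join a b \<in> carrier G \<and> le a (join a b) \<and> le b (join a b) \<and> (\<forall>c\<in>carrier G. le a c \<and> le b c \<longrightarrow> le (join a b) c)"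
proof -
  have "\<exists>j. j \<in> carrier G \<and> le a j \<and> le b j \<and> (\<forall>c\<in>carrier G. le a c \<and> le b c \<longrightarrow> le j c)"
    using lat assms unfolding leL_lattice_def by blast
  then show ?thesis unfolding join_def by (rule someI_ex)
qed
lemma meet_closed[simp]: "a \<in> carrier G \<Longrightarrow> b \<in> carrier G \<Longrightarrow> meet a b \<in> carrier G" using meet_props by blast
lemma meet_le1: "a \<in> carrier G \<Longrightarrow> b \<in> carrier G \<Longrightarrow> le (meet a b) a" using meet_props by blast
lemma meet_le2: "a \<in> carrier G \<Longrightarrow> b \<in> carrier G \<Longrightarrow> le (meet a b) b" using meet_props by blast
lemma meet_glb: "a \<in> carrier G \<Longrightarrow> b \<in> carrier G \<Longrightarrow> c \<in> carrier G \<Longrightarrow> le c a \<Longrightarrow> le c b \<Longrightarrow> le c (meet a b)" using meet_props by blast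
lemma join_closed[simp]: "a \<in> carrier G \<Longrightarrow> b \<in> carrier G \<Longrightarrow> join a b \<in> carrier G" using join_props by blast
lemma join_ge1: "a \<in> carrier G \<Longrightarrow> b \<in> carrier G \<Longrightarrow> le a (join a b)" using join_props by blast
lemma join_ge2: "a \<in> carrier G \<Longrightarrow> b \<in> carrier G \<Longrightarrow> le b (join a b)" using join_props by blast
lemma join_lub: "a \<in> carrier G \<Longrightarrow> b \<in> carrier G \<Longrightarrow> c \<in> carrier G \<Longrightarrow> le a c \<Longrightarrow> le b c \<Longrightarrow> le (join a b) c" using join_props by blast

lemma meet_left: assumes "a \<in> carrier G" "b \<in> carrier G" "z \<in> carrier G"
  shows "z \<otimes> meet a b = meet (z \<otimes> a) (z \<otimes> b)"
proof (rule le_antisym)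
  show "le (z \<otimes> meet a b) (meet (z \<otimes> a) (z \<otimes> b))"
    using assms by (intro meet_glb) (auto simp: le_left meet_le1 meet_le2)
  have "le (inv z \<otimes> meet (z \<otimes> a) (z \<otimes> b)) (meet a b)"
  proof (rule meet_glb)
    show "le (inv z \<otimes> meet (z \<otimes> a) (z \<otimes> b)) a"
      using le_left[of "inv z \<otimes> meet (z \<otimes> a) (z \<otimes> b)" a z] assms meet_le1[of "z \<otimes> a" "z \<otimes> b"] by simp
    show "le (inv z \<otimes> meet (z \<otimes> a) (z \<otimes> b)) b"
      using le_left[of "inv z \<otimes> meet (z \<otimes> a) (z \<otimes> b)" b z] assms meet_le2[of "z \<otimes> a" "z \<otimes> b"] by simp
  qed (use assms in auto)
  then show "le (meet (z \<otimes> a) (z \<otimes> b)) (z \<otimes> meet a b)"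
    using le_left[of "inv z \<otimes> meet (z \<otimes> a) (z \<otimes> b)" "meet a b" z] assms by simp
qed (use assms in auto)

lemma join_left: assumes "a \<in> carrier G" "b \<in> carrier G" "z \<in> carrier G"
  shows "z \<otimes> join a b = join (z \<otimes> a) (z \<otimes> b)"
proof (rule le_antisym)
  show "le (join (z \<otimes> a) (z \<otimes> b)) (z \<otimes> join a b)"
    using assms by (intro join_lub) (auto simp: le_left join_ge1 join_ge2)
  have "le (join a b) (inv z \<otimes> join (z \<otimes> a) (z \<otimes> b))"
  proof (rule join_lub)
    show "le a (inv z \<otimes> join (z \<otimes> a) (z \<otimes> b))"
      using le_left[of a "inv z \<otimes> join (z \<otimes> a) (z \<otimes> b)" z] assms join_ge1[of "z \<otimes> a" "z \<otimes> b"] by simp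
    show "le b (inv z \<otimes> join (z \<otimes> a) (z \<otimes> b))"
      using le_left[of b "inv z \<otimes> join (z \<otimes> a) (z \<otimes> b)" z] assms join_ge2[of "z \<otimes> a" "z \<otimes> b"] by simp
  qed (use assms in auto)
  then show "le (z \<otimes> join a b) (join (z \<otimes> a) (z \<otimes> b))"
    using le_left[of "join a b" "inv z \<otimes> join (z \<otimes> a) (z \<otimes> b)" z] assms by simp
qed (use assms in auto)


lemma Div_iff: "c \<in> Div G M e \<longleftrightarrow> c \<in> M \<and> inv c \<otimes> e \<in> M" by (simp add: DivL_def leL_def)
lemma Div_sub: "Div G M e \<subseteq> carrier G" using M_sub by (auto simp: Div_iff)
lemma bal_M: "balanced G M e \<Longrightarrow> e \<in> M" by (simp add: balanced_def)
lemma bal_R: assumes "balanced G M e" "c \<in> Div G M e" shows "e \<otimes> inv c \<in> M"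
proof -
  have "c \<in> DivR G M e" using assms by (simp add: balanced_def)
  then show ?thesis by (simp add: DivR_def leR_def)
qed
lemma bal_Rin: assumes "balanced G M e" "c \<in> M" "e \<otimes> inv c \<in> M" shows "c \<in> Div G M e"
proof -
  have "c \<in> DivR G M e" using assms by (simp add: DivR_def leR_def)
  then show ?thesis using assms by (simp add: balanced_def)
qed
lemma bal_self: "balanced G M e \<Longrightarrow> e \<in> Div G M e"
  using M_car by (simp add: Div_iff bal_M M_one)
lemma bal_one: "balanced G M e \<Longrightarrow> \<one> \<in> Div G M e"
  using M_car by (simp add: Div_iff bal_M M_one)
lemma compl1: assumes "balanced G M e" "c \<in> Div G M e" shows "inv c \<otimes> e \<in> Div G M e"
proof (rule bal_Rin[OF assms(1)])
  have c: "c \<in> carrier G" "e \<in> carrier G" using assms Div_sub M_car bal_M by auto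
  show "inv c \<otimes> e \<in> M" using assms by (simp add: Div_iff)
  have "e \<otimes> inv (inv c \<otimes> e) = c" using c by (simp add: inv_mult_group m_assoc)
  then show "e \<otimes> inv (inv c \<otimes> e) \<in> M" using assms by (simp add: Div_iff)
qed
lemma compl2: assumes "balanced G M e" "c \<in> Div G M e" shows "e \<otimes> inv c \<in> Div G M e"
proof -
  have c: "c \<in> carrier G" "e \<in> carrier G" using assms Div_sub M_car bal_M by auto
  have "inv (e \<otimes> inv c) \<otimes> e = c" using c by (simp add: inv_mult_group m_assoc)
  then show ?thesis using assms bal_R[OF assms] by (simp add: Div_iff)
qed
lemma conj1: assumes "balanced G M e" "c \<in> Div G M e" shows "inv e \<otimes> c \<otimes> e \<in> Div G M e"
proof -
  have c: "c \<in> carrier G" "e \<in> carrier G" using assms Div_sub M_car bal_M by auto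
  have "inv (inv c \<otimes> e) \<otimes> e = inv e \<otimes> c \<otimes> e" using c by (simp add: inv_mult_group)
  then show ?thesis using compl1[OF assms(1) compl1[OF assms]] by simp
qed
lemma conj2: assumes "balanced G M e" "c \<in> Div G M e" shows "e \<otimes> c \<otimes> inv e \<in> Div G M e"
proof -
  have c: "c \<in> carrier G" "e \<in> carrier G" using assms Div_sub M_car bal_M by auto
  have "e \<otimes> inv (e \<otimes> inv c) = e \<otimes> c \<otimes> inv e" using c by (simp add: inv_mult_group m_assoc)
  then show ?thesis using compl2[OF assms(1) compl2[OF assms]] by simp
qed
lemma Div_down: assumes "c \<in> M" "le c x" "x \<in> Div G M e" "e \<in> carrier G" shows "c \<in> Div G M e"
proof -
  show ?thesis using assms le_trans[of c x e] M_car Div_sub by (auto simp: Div_iff le_def')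
qed
lemma Div_rq: assumes "balanced G M e" "d \<in> M" "le d x" "x \<in> Div G M e" shows "inv d \<otimes> x \<in> Div G M e"
proof -
  have c: "d \<in> carrier G" "x \<in> carrier G" "e \<in> carrier G" using assms Div_sub M_car bal_M by auto
  have dD: "d \<in> Div G M e" using Div_down assms c by blast
  have "inv d \<otimes> x \<in> M" using assms by (simp add: le_def')
  moreover have "le (inv d \<otimes> x) (inv d \<otimes> e)" using le_left c assms by (simp add: Div_iff le_def')
  moreover have "le (inv d \<otimes> e) e" using compl1[OF assms(1) dD] by (simp add: Div_iff le_def')
  ultimately show ?thesis using le_trans[of "inv d \<otimes> x" "inv d \<otimes> e" e] c by (simp add: Div_iff le_def')
qed

lemma conj_gen: assumes "balanced G M e" "m \<in> mon_gen G (Div G M e)"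
  shows "inv e \<otimes> m \<otimes> e \<in> mon_gen G (Div G M e) \<and> e \<otimes> m \<otimes> inv e \<in> mon_gen G (Div G M e)"
  using Div_sub assms(2)
proof (induction m rule: mon_gen_induct)
  case one
  have "e \<in> carrier G" using assms bal_M M_car by auto
  then show ?case by (simp add: mon_gen_one)
next
  case (mult a y)
  have c: "a \<in> carrier G" "y \<in> carrier G" "e \<in> carrier G" using mult Div_sub mon_gen_sub[OF Div_sub] assms bal_M M_car by auto
  have 1: "inv e \<otimes> (a \<otimes> y) \<otimes> e = (inv e \<otimes> a \<otimes> e) \<otimes> (inv e \<otimes> y \<otimes> e)" using c by (simp add: m_assoc)
  have 2: "e \<otimes> (a \<otimes> y) \<otimes> inv e = (e \<otimes> a \<otimes> inv e) \<otimes> (e \<otimes> y \<otimes> inv e)" using c by (simp add: m_assoc)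
  have 3: "inv e \<otimes> a \<otimes> e \<in> mon_gen G (Div G M e)" "e \<otimes> a \<otimes> inv e \<in> mon_gen G (Div G M e)"
    using conj1[OF assms(1) mult(1)] conj2[OF assms(1) mult(1)] by (auto intro: mon_gen_incl[OF Div_sub])
  show ?case unfolding 1 2 using mult 3 by (auto intro: mon_gen_mult[OF Div_sub])
qed

lemma conj_pow: assumes "balanced G M e" "m \<in> mon_gen G (Div G M e)"
  shows "inv (e [^] n) \<otimes> m \<otimes> e [^] (n::nat) \<in> mon_gen G (Div G M e) \<and> e [^] n \<otimes> m \<otimes> inv (e [^] n) \<in> mon_gen G (Div G M e)"
  using assms(2)
proof (induction n arbitrary: m)
  case 0
  then have "m \<in> carrier G" using mon_gen_sub[OF Div_sub] by auto
  then show ?case using 0 by auto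
next
  case (Suc n)
  have c: "m \<in> carrier G" "e \<in> carrier G" using Suc mon_gen_sub[OF Div_sub] assms bal_M M_car by auto
  have 1: "inv (e [^] Suc n) \<otimes> m \<otimes> e [^] Suc n = inv e \<otimes> (inv (e [^] n) \<otimes> m \<otimes> e [^] n) \<otimes> e"
    using c by (simp add: inv_mult_group m_assoc)
  have 2: "e [^] Suc n \<otimes> m \<otimes> inv (e [^] Suc n) = e [^] n \<otimes> (e \<otimes> m \<otimes> inv e) \<otimes> inv (e [^] n)"
    using c by (simp add: inv_mult_group m_assoc)
  show ?case unfolding 1 2 using Suc conj_gen[OF assms(1)] by blast
qed


abbreviation "D \<equiv> Div G M Dl"
abbreviation "Dd \<equiv> Div G M dl"

lemma Dl_M: "Dl \<in> M" using balD bal_M by auto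
lemma dl_M: "dl \<in> M" using bald bal_M by auto
lemma Dl_car[simp]: "Dl \<in> carrier G" using Dl_M M_car by auto
lemma dl_car[simp]: "dl \<in> carrier G" using dl_M M_car by auto
lemma D_M: "x \<in> D \<Longrightarrow> x \<in> M" by (simp add: Div_iff)
lemma Dd_M: "x \<in> Dd \<Longrightarrow> x \<in> M" by (simp add: Div_iff)
lemma D_car: "x \<in> D \<Longrightarrow> x \<in> carrier G" using D_M M_car by auto
lemma Dd_car: "x \<in> Dd \<Longrightarrow> x \<in> carrier G" using Dd_M M_car by auto
lemma Dd_D: "x \<in> Dd \<Longrightarrow> x \<in> D" using Ddef by auto
lemma Dd_N: "x \<in> Dd \<Longrightarrow> x \<in> N" using Ddef by auto
lemma N_M: "x \<in> N \<Longrightarrow> x \<in> M"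
  using Ndef by (auto simp: mon_gen_def intro!: lprod_M dest: Dd_M)
lemma N_car: "x \<in> N \<Longrightarrow> x \<in> carrier G" using N_M M_car by auto
lemma N_mult: "x \<in> N \<Longrightarrow> y \<in> N \<Longrightarrow> x \<otimes> y \<in> N" using Ndef mon_gen_mult[OF Div_sub] by auto
lemma N_one: "\<one> \<in> N" using Ndef mon_gen_one by auto
lemma dl_Dd: "dl \<in> Dd" using bal_self bald by auto
lemma dl_N: "dl \<in> N" using dl_Dd Dd_N by auto
lemma dl_D: "dl \<in> D" using dl_Dd Dd_D by auto
lemma Dl_D: "Dl \<in> D" using bal_self balD by auto
lemma le_D: "x \<in> D \<Longrightarrow> le x Dl" by (simp add: Div_iff le_def')
lemma le_Dd: "x \<in> Dd \<Longrightarrow> le x dl" by (simp add: Div_iff le_def')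
lemma D_iff: "x \<in> D \<longleftrightarrow> x \<in> M \<and> le x Dl" by (simp add: Div_iff le_def')
lemma Dd_iff: "x \<in> Dd \<longleftrightarrow> x \<in> M \<and> le x dl" by (simp add: Div_iff le_def')

lemma Mconj: "m \<in> M \<Longrightarrow> inv (Dl [^] (n::nat)) \<otimes> m \<otimes> Dl [^] n \<in> M \<and> Dl [^] n \<otimes> m \<otimes> inv (Dl [^] n) \<in> M"
  using conj_pow[OF balD, of m n] genM by simp
lemma Nconj: "m \<in> N \<Longrightarrow> inv (dl [^] (n::nat)) \<otimes> m \<otimes> dl [^] n \<in> N \<and> dl [^] n \<otimes> m \<otimes> inv (dl [^] n) \<in> N"
  using conj_pow[OF bald, of m n] Ndef by simp

lemma powS: "x \<in> carrier G \<Longrightarrow> x [^] Suc n = x \<otimes> x [^] (n::nat)"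
  using nat_pow_Suc2 by auto
lemma Dlpow_M: "Dl [^] (n::nat) \<in> M"
  by (induction n) (auto simp: M_one M_mult Dl_M)
lemma dlpow_N: "dl [^] (n::nat) \<in> N"
  by (induction n) (auto simp: N_one N_mult dl_N)

lemma RM1: assumes "x \<in> carrier G" "y \<in> carrier G" "le x y" shows "le (x \<otimes> Dl [^] (n::nat)) (y \<otimes> Dl [^] n)"
proof -
  have "inv (x \<otimes> Dl [^] n) \<otimes> (y \<otimes> Dl [^] n) = inv (Dl [^] n) \<otimes> (inv x \<otimes> y) \<otimes> Dl [^] n"
    using assms by (simp add: inv_mult_group m_assoc)
  then show ?thesis using Mconj[of "inv x \<otimes> y" n] assms by (simp add: le_def')
qed
lemma RM2: assumes "x \<in> carrier G" "y \<in> carrier G" "le x y" shows "le (x \<otimes> inv (Dl [^] (n::nat))) (y \<otimes> inv (Dl [^] n))"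
proof -
  have "inv (x \<otimes> inv (Dl [^] n)) \<otimes> (y \<otimes> inv (Dl [^] n)) = Dl [^] n \<otimes> (inv x \<otimes> y) \<otimes> inv (Dl [^] n)"
    using assms by (simp add: inv_mult_group m_assoc)
  then show ?thesis using Mconj[of "inv x \<otimes> y" n] assms by (simp add: le_def')
qed
lemma le_mulM: "x \<in> carrier G \<Longrightarrow> m \<in> M \<Longrightarrow> le x (x \<otimes> m)"
  using M_car by (simp add: le_def' m_assoc[symmetric])
lemma le_mulinvM: "x \<in> carrier G \<Longrightarrow> m \<in> M \<Longrightarrow> le (x \<otimes> inv m) x"
  using M_car by (simp add: le_def' inv_mult_group m_assoc)
lemma le_pow1: "x \<in> carrier G \<Longrightarrow> le x (x \<otimes> Dl [^] (n::nat))" using le_mulM Dlpow_M by auto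
lemma le_pow2: "x \<in> carrier G \<Longrightarrow> le (x \<otimes> inv (Dl [^] (n::nat))) x" using le_mulinvM Dlpow_M by auto

lemma one_le_M: "m \<in> M \<Longrightarrow> le \<one> m" using M_car by (simp add: le_one_iff)

lemma M_bound: "m \<in> M \<Longrightarrow> \<exists>k. le m (Dl [^] (k::nat))"
proof -
  assume "m \<in> M"
  then have mg: "m \<in> mon_gen G D" using genM by simp
  show ?thesis using Div_sub[of Dl] mg
  proof (induction m rule: mon_gen_induct)
    case one then show ?case by (intro exI[of _ 0]) (simp add: le_refl)
  next
    case (mult a y)
    then obtain k :: nat where k: "le y (Dl [^] k)" by auto
    have c: "a \<in> carrier G" "y \<in> carrier G" using mult D_car mon_gen_sub[OF Div_sub] by auto
    have "le (a \<otimes> y) (a \<otimes> Dl [^] k)" using k c le_left by simp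
    moreover have "le (a \<otimes> Dl [^] k) (Dl \<otimes> Dl [^] k)" using RM1[of a Dl k] c le_D mult by simp
    moreover have "Dl [^] Suc k = Dl \<otimes> Dl [^] k" using powS by simp
    ultimately have "le (a \<otimes> y) (Dl [^] Suc k)" using c le_trans by simp
    then show ?case by blast
  qed
qed

lemma LG: assumes "c \<in> M" "le c (Dl [^] Suc k)" shows "le (inv (meet Dl c) \<otimes> c) (Dl [^] k)"
proof -
  have c: "c \<in> carrier G" using assms M_car by auto
  have "le (c \<otimes> inv (Dl [^] k)) (Dl [^] Suc k \<otimes> inv (Dl [^] k))" using RM2 assms c by simp
  also have "Dl [^] Suc k \<otimes> inv (Dl [^] k) = Dl" 
    using powS[of Dl k] by (simp add: m_assoc del: nat_pow_Suc)
  finally have 1: "le (c \<otimes> inv (Dl [^] k)) Dl" .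
  have "le (c \<otimes> inv (Dl [^] k)) (meet Dl c)" using 1 le_pow2 c by (intro meet_glb) auto
  then have "le (c \<otimes> inv (Dl [^] k) \<otimes> Dl [^] k) (meet Dl c \<otimes> Dl [^] k)" using RM1 c by simp
  then have "le c (meet Dl c \<otimes> Dl [^] k)" using c by (simp add: m_assoc)
  then have "le (inv (meet Dl c) \<otimes> c) (inv (meet Dl c) \<otimes> (meet Dl c \<otimes> Dl [^] k))"
    using le_left[of c "meet Dl c \<otimes> Dl [^] k" "inv (meet Dl c)"] c by simp
  then show ?thesis using c by simp
qed

lemma meet_M: "a \<in> M \<Longrightarrow> b \<in> M \<Longrightarrow> meet a b \<in> M"
  using M_car one_le_M meet_glb[of a b \<one>] le_one_iff by auto
lemma join_M: "a \<in> M \<Longrightarrow> b \<in> M \<Longrightarrow> join a b \<in> M"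
  using M_car one_le_M join_ge1[of a b] le_trans[of \<one> a "join a b"] le_one_iff by auto
lemma meetD_D: "c \<in> M \<Longrightarrow> meet Dl c \<in> D"
  using meet_M Dl_M D_iff meet_le1 M_car by auto


lemma le_Dl_mulDl: assumes "a \<in> M" shows "le Dl (a \<otimes> Dl)"
proof -
  have "inv (Dl [^] (1::nat)) \<otimes> a \<otimes> Dl [^] (1::nat) \<in> M" using Mconj assms by blast
  then show ?thesis using assms M_car by (simp add: le_def' m_assoc)
qed

lemma N_gen: "N = mon_gen G Dd" using Ndef by simp

lemma CL: assumes "n \<in> N" shows "meet Dl n \<in> Dd"
  using Div_sub[of dl] assms[unfolded N_gen]
proof (induction n rule: mon_gen_induct)
  case one
  have "meet Dl \<one> = \<one>"
    using meet_le2[of Dl \<one>] meet_glb[of Dl \<one> \<one>] one_le_M[OF Dl_M] le_refl[of \<one>]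
    by (intro le_antisym) auto
  then show ?case using bal_one[OF bald] by simp
next
  case (mult d y)
  define e where "e = meet Dl y"
  have yN: "y \<in> N" using mult N_gen by simp
  have c: "d \<in> carrier G" "y \<in> carrier G" "d \<in> M" "y \<in> M" "e \<in> Dd" "e \<in> M" "e \<in> carrier G"
    using mult Dd_car Dd_M yN N_M N_car e_def Dd_M Dd_car by auto
  define t where "t = meet Dl (d \<otimes> y)"
  have t: "t \<in> carrier G" "le t Dl" "le t (d \<otimes> y)" "t \<in> M"
    using t_def c meet_le1 meet_le2 meet_M M_mult Dl_M by auto
  have "le t (d \<otimes> Dl)" using t le_Dl_mulDl[OF c(3)] c le_trans by auto
  then have "le (inv d \<otimes> t) Dl" using le_left[of "inv d \<otimes> t" Dl d] c t by simp
  moreover have "le (inv d \<otimes> t) y" using le_left[of "inv d \<otimes> t" y d] c t by simp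
  ultimately have "le (inv d \<otimes> t) e" unfolding e_def using c t by (intro meet_glb) auto
  then have tde: "le t (d \<otimes> e)" using le_left[of "inv d \<otimes> t" e d] c t by simp
  define j where "j = join t d"
  have j: "j \<in> carrier G" "le t j" "le d j" "j \<in> M" using j_def c t join_ge1 join_ge2 join_M by auto
  have "le j (d \<otimes> e)" unfolding j_def using tde le_mulM[of d e] c t by (intro join_lub) auto
  then have ue: "le (inv d \<otimes> j) e" using le_left[of "inv d \<otimes> j" e d] c j by simp
  have uM: "inv d \<otimes> j \<in> M" using j by (simp add: le_def')
  have uDd: "inv d \<otimes> j \<in> Dd" using Div_down[OF uM ue c(5)] by simp
  have "j = d \<otimes> (inv d \<otimes> j)" using c j by simp
  then have jN: "j \<in> N" using N_mult[of d "inv d \<otimes> j"] mult(1) Dd_N uDd by metis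
  have "le j Dl" unfolding j_def using t c le_D Dd_D mult by (intro join_lub) auto
  then have "j \<in> Dd" using jN j Ddef D_iff by auto
  then show ?case using Div_down[of t j dl] t j by (simp add: t_def)
qed

lemma QL: assumes "n \<in> N" shows "\<forall>e. e \<in> Dd \<longrightarrow> le e n \<longrightarrow> inv e \<otimes> n \<in> N"
  using Div_sub[of dl] assms[unfolded N_gen]
proof (induction n rule: mon_gen_induct)
  case one
  show ?case
  proof (intro allI impI)
    fix e assume e: "e \<in> Dd" "le e \<one>"
    then have "e = \<one>" using one_le_M[of e] Dd_M Dd_car by (intro le_antisym) auto
    then show "inv e \<otimes> \<one> \<in> N" using N_one by simp
  qed
next
  case (mult d y)
  have yN: "y \<in> N" using mult N_gen by simp
  have c: "d \<in> carrier G" "y \<in> carrier G" "d \<in> M" "y \<in> M" "d \<in> Dd" "d \<otimes> y \<in> N"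
    using mult Dd_car Dd_M yN N_M N_car N_mult Dd_N by auto
  show ?case
  proof (intro allI impI)
    fix e assume e: "e \<in> Dd" "le e (d \<otimes> y)"
    have ec: "e \<in> carrier G" "e \<in> M" using e Dd_car Dd_M by auto
    define j where "j = join e d"
    have j: "j \<in> carrier G" "le e j" "le d j" "j \<in> M" using j_def c ec join_ge1 join_ge2 join_M by auto
    have jdy: "le j (d \<otimes> y)" unfolding j_def using e c ec le_mulM by (intro join_lub) auto
    have "le j Dl" unfolding j_def using e ec c le_D Dd_D by (intro join_lub) auto
    then have "le j (meet Dl (d \<otimes> y))" using jdy j c by (intro meet_glb) auto
    then have jDd: "j \<in> Dd" using Div_down[OF j(4) _ CL[OF c(6)]] by simp
    have uDd: "inv d \<otimes> j \<in> Dd" using Div_rq[OF bald c(3) j(3) jDd] .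
    have "le (inv d \<otimes> j) y" using le_left[of "inv d \<otimes> j" y d] c j jdy by simp
    then have IH: "inv (inv d \<otimes> j) \<otimes> y \<in> N" using mult uDd by auto
    have ej: "inv e \<otimes> j \<in> N" using Div_rq[OF bald ec(2) j(2) jDd] Dd_N by auto
    have "inv e \<otimes> (d \<otimes> y) = (inv e \<otimes> j) \<otimes> (inv (inv d \<otimes> j) \<otimes> y)"
      using c ec j by (simp add: inv_mult_group m_assoc)
    then show "inv e \<otimes> (d \<otimes> y) \<in> N" using N_mult[OF ej IH] by simp
  qed
qed

lemma QL2: assumes "c \<in> N" shows "\<forall>n. n \<in> N \<longrightarrow> le c n \<longrightarrow> inv c \<otimes> n \<in> N"
  using Div_sub[of dl] assms[unfolded N_gen]
proof (induction c rule: mon_gen_induct)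
  case one
  then show ?case using N_car by simp
next
  case (mult e c')
  have c'N: "c' \<in> N" using mult N_gen by simp
  have c: "e \<in> carrier G" "c' \<in> carrier G" "e \<in> M" "c' \<in> M"
    using mult Dd_car Dd_M c'N N_M N_car by auto
  show ?case
  proof (intro allI impI)
    fix n assume n: "n \<in> N" "le (e \<otimes> c') n"
    have nc: "n \<in> carrier G" using n N_car by auto
    have "le e n" using le_trans[of e "e \<otimes> c'" n] le_mulM c n nc by auto
    then have en: "inv e \<otimes> n \<in> N" using QL[OF n(1)] mult by auto
    have "le c' (inv e \<otimes> n)" using le_left[of c' "inv e \<otimes> n" e] c n nc by simp
    then have "inv c' \<otimes> (inv e \<otimes> n) \<in> N" using mult en by auto
    then show "inv (e \<otimes> c') \<otimes> n \<in> N" using c nc by (simp add: inv_mult_group m_assoc)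
  qed
qed

lemma N1k: "\<forall>c n. c \<in> M \<longrightarrow> n \<in> N \<longrightarrow> le c n \<longrightarrow> le c (Dl [^] (k::nat)) \<longrightarrow> c \<in> N"
proof (induction k)
  case 0
  show ?case
  proof (intro allI impI)
    fix c n assume c: "c \<in> M" "n \<in> N" "le c n" "le c (Dl [^] (0::nat))"
    then have "c = \<one>" using one_le_M[of c] M_car by (intro le_antisym) auto
    then show "c \<in> N" using N_one by simp
  qed
next
  case (Suc k)
  show ?case
  proof (intro allI impI)
    fix c n assume c: "c \<in> M" "n \<in> N" "le c n" "le c (Dl [^] Suc k)"
    have cc: "c \<in> carrier G" "n \<in> carrier G" using c M_car N_car by auto
    define t where "t = meet Dl c"
    have t: "t \<in> carrier G" "t \<in> M" "le t Dl" "le t c" using t_def meet_M Dl_M c cc meet_le1 meet_le2 by auto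
    have tn: "le t n" using le_trans[of t c n] t c cc by auto
    then have "le t (meet Dl n)" using t cc by (intro meet_glb) auto
    then have tDd: "t \<in> Dd" using Div_down[OF t(2) _ CL[OF c(2)]] by simp
    have c'M: "inv t \<otimes> c \<in> M" using t by (simp add: le_def')
    have "le (inv t \<otimes> c) (inv t \<otimes> n)" using le_left[of c n "inv t"] cc t c by simp
    moreover have "inv t \<otimes> n \<in> N" using QL[OF c(2)] tDd tn by auto
    moreover have "le (inv t \<otimes> c) (Dl [^] k)" using LG[OF c(1) c(4)] t_def by simp
    ultimately have "inv t \<otimes> c \<in> N" using Suc c'M by blast
    then have "t \<otimes> (inv t \<otimes> c) \<in> N" using N_mult tDd Dd_N by auto
    then show "c \<in> N" using t cc by simp
  qed
qed

lemma N1: "c \<in> M \<Longrightarrow> n \<in> N \<Longrightarrow> le c n \<Longrightarrow> c \<in> N"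
  using N1k M_bound by blast


lemma H_subgrp: "subgroup H G" using generate_is_subgroup[OF Div_sub[of dl]] Hdef by simp
lemma H_car: "x \<in> H \<Longrightarrow> x \<in> carrier G" using subgroup.subset[OF H_subgrp] by auto
lemma H_mult: "x \<in> H \<Longrightarrow> y \<in> H \<Longrightarrow> x \<otimes> y \<in> H" using subgroup.m_closed[OF H_subgrp] by auto
lemma H_inv: "x \<in> H \<Longrightarrow> inv x \<in> H" using subgroup.m_inv_closed[OF H_subgrp] by auto
lemma H_one: "\<one> \<in> H" using subgroup.one_closed[OF H_subgrp] by auto
lemma N_H: assumes "n \<in> N" shows "n \<in> H"
  using Div_sub[of dl] assms[unfolded N_gen]
proof (induction n rule: mon_gen_induct)
  case one then show ?case using H_one by simp
next
  case (mult a y) then show ?case using H_mult Hdef generate.incl[of a Dd G] by auto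
qed
lemma dl_H: "dl \<in> H" using N_H dl_N by auto

lemma pow_add: "x \<in> carrier G \<Longrightarrow> x [^] ((k::nat) + l) = x [^] k \<otimes> x [^] l"
  using nat_pow_mult by auto

lemma Rrep: assumes "h \<in> H" shows "\<exists>k::nat. \<exists>n. n \<in> N \<and> h = inv (dl [^] k) \<otimes> n"
  using assms[unfolded Hdef]
proof (induction h rule: generate.induct)
  case one
  then show ?case using N_one by (intro exI[of _ 0] exI[of _ \<one>]) auto
next
  case (incl h)
  then show ?case using Dd_N Dd_car by (intro exI[of _ 0] exI[of _ h]) auto
next
  case (inv h)
  have "dl \<otimes> inv h \<in> N" using compl2[OF bald inv] Dd_N by auto
  moreover have "inv h = inv (dl [^] (1::nat)) \<otimes> (dl \<otimes> inv h)" using inv Dd_car by (simp add: m_assoc[symmetric])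
  ultimately show ?case by blast
next
  case (eng h1 h2)
  obtain k :: nat and n where kn: "n \<in> N" "h1 = inv (dl [^] k) \<otimes> n" using eng by auto
  obtain l :: nat and m where lm: "m \<in> N" "h2 = inv (dl [^] l) \<otimes> m" using eng by auto
  have c: "n \<in> carrier G" "m \<in> carrier G" using kn lm N_car by auto
  have "h1 \<otimes> h2 = inv (dl [^] (l + k)) \<otimes> ((dl [^] l \<otimes> n \<otimes> inv (dl [^] l)) \<otimes> m)"
    using c kn lm by (simp add: pow_add inv_mult_group m_assoc)
  moreover have "(dl [^] l \<otimes> n \<otimes> inv (dl [^] l)) \<otimes> m \<in> N" using Nconj[OF kn(1)] lm N_mult by auto
  ultimately show ?case by blast
qed

lemma rep_H: "n \<in> N \<Longrightarrow> inv (dl [^] (k::nat)) \<otimes> n \<in> H"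
  using H_mult H_inv N_H dlpow_N by auto

lemma N3: assumes "h \<in> H" "h \<in> M" shows "h \<in> N"
proof -
  obtain k n where kn: "n \<in> N" "h = inv (dl [^] (k::nat)) \<otimes> n" using Rrep assms by blast
  have c: "n \<in> carrier G" using kn N_car by auto
  have "le \<one> h" using assms one_le_M by auto
  then have "le (dl [^] k) (dl [^] k \<otimes> h)" using le_left[of \<one> h "dl [^] k"] assms H_car by simp
  then have "le (dl [^] k) n" using kn c by simp
  then show ?thesis using QL2[OF dlpow_N[of k]] kn by auto
qed

lemma Nbound: assumes "n \<in> N" shows "\<exists>l::nat. le n (dl [^] l)"
  using Div_sub[of dl] assms[unfolded N_gen]
proof (induction n rule: mon_gen_induct)
  case one then show ?case by (intro exI[of _ 0]) (simp add: le_refl)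
next
  case (mult d y)
  then obtain l :: nat where l: "le y (dl [^] l)" by auto
  have c: "d \<in> carrier G" "y \<in> carrier G" using mult Dd_car mon_gen_sub[OF Div_sub] by auto
  have 1: "le (d \<otimes> y) (d \<otimes> dl [^] l)" using l c le_left by simp
  have "inv (dl [^] l) \<otimes> (inv d \<otimes> dl) \<otimes> dl [^] l \<in> N" using Nconj compl1[OF bald mult(1)] Dd_N by blast
  moreover have "inv (d \<otimes> dl [^] l) \<otimes> (dl \<otimes> dl [^] l) = inv (dl [^] l) \<otimes> (inv d \<otimes> dl) \<otimes> dl [^] l"
    using c by (simp add: inv_mult_group m_assoc)
  ultimately have 2: "le (d \<otimes> dl [^] l) (dl \<otimes> dl [^] l)" using N_M by (simp add: le_def')
  have "dl [^] Suc l = dl \<otimes> dl [^] l" using powS by simp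
  then have "le (d \<otimes> y) (dl [^] Suc l)" using 1 2 c le_trans by simp
  then show ?case by blast
qed

lemma dlpow_mono: "le (dl [^] (k::nat)) (dl [^] (k + l))"
  using dlpow_N[of l] N_M by (simp add: le_def' pow_add m_assoc[symmetric])

lemma H_meet1: assumes "y \<in> H" shows "meet \<one> y \<in> H"
proof -
  obtain k n where kn: "n \<in> N" "y = inv (dl [^] (k::nat)) \<otimes> n" using Rrep assms by blast
  have c: "n \<in> carrier G" "n \<in> M" using kn N_car N_M by auto
  have "meet \<one> y = meet (inv (dl [^] k) \<otimes> dl [^] k) (inv (dl [^] k) \<otimes> n)" using kn by simp
  also have "\<dots> = inv (dl [^] k) \<otimes> meet (dl [^] k) n" using meet_left c by simp
  finally have e: "meet \<one> y = inv (dl [^] k) \<otimes> meet (dl [^] k) n" .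
  have "meet (dl [^] k) n \<in> N" using N1[OF meet_M[OF N_M[OF dlpow_N] c(2)] kn(1)] meet_le2 c by simp
  then show ?thesis using e rep_H by simp
qed

lemma H_join1: assumes "y \<in> H" shows "join \<one> y \<in> H"
proof -
  obtain k n where kn: "n \<in> N" "y = inv (dl [^] (k::nat)) \<otimes> n" using Rrep assms by blast
  have c: "n \<in> carrier G" "n \<in> M" using kn N_car N_M by auto
  obtain l :: nat where l: "le n (dl [^] l)" using Nbound kn by auto
  have "join \<one> y = join (inv (dl [^] k) \<otimes> dl [^] k) (inv (dl [^] k) \<otimes> n)" using kn by simp
  also have "\<dots> = inv (dl [^] k) \<otimes> join (dl [^] k) n" using join_left c by simp
  finally have e: "join \<one> y = inv (dl [^] k) \<otimes> join (dl [^] k) n" .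
  have "le n (dl [^] (l + k))" using l dlpow_mono[of l k] le_trans c by simp
  then have "le (join (dl [^] k) n) (dl [^] (k + l))" using dlpow_mono[of k l] c by (intro join_lub) (auto simp: add.commute)
  then have "join (dl [^] k) n \<in> N" using N1[OF join_M[OF N_M[OF dlpow_N] c(2)] dlpow_N] by blast
  then show ?thesis using e rep_H by simp
qed

lemma H_meet: assumes "x \<in> H" "y \<in> H" shows "meet x y \<in> H"
proof -
  have c: "x \<in> carrier G" "y \<in> carrier G" using assms H_car by auto
  have "meet x y = meet (x \<otimes> \<one>) (x \<otimes> (inv x \<otimes> y))" using c by simp
  also have "\<dots> = x \<otimes> meet \<one> (inv x \<otimes> y)" using meet_left c by simp
  finally show ?thesis using H_meet1[of "inv x \<otimes> y"] H_mult H_inv assms by simp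
qed
lemma H_join: assumes "x \<in> H" "y \<in> H" shows "join x y \<in> H"
proof -
  have c: "x \<in> carrier G" "y \<in> carrier G" using assms H_car by auto
  have "join x y = join (x \<otimes> \<one>) (x \<otimes> (inv x \<otimes> y))" using c by simp
  also have "\<dots> = x \<otimes> join \<one> (inv x \<otimes> y)" using join_left c by simp
  finally show ?thesis using H_join1[of "inv x \<otimes> y"] H_mult H_inv assms by simp
qed


lemma RMD1: "x \<in> carrier G \<Longrightarrow> y \<in> carrier G \<Longrightarrow> le x y \<Longrightarrow> le (x \<otimes> Dl) (y \<otimes> Dl)"
  using RM1[of x y 1] by simp
lemma RMD2: "x \<in> carrier G \<Longrightarrow> y \<in> carrier G \<Longrightarrow> le x y \<Longrightarrow> le (x \<otimes> inv Dl) (y \<otimes> inv Dl)"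
  using RM2[of x y 1] by simp

lemma SLp: assumes "x \<in> H" "h \<in> H" "g \<in> carrier G" "le h g" "le x (g \<otimes> Dl)"
  shows "le (x \<otimes> inv dl) g"
proof -
  have c: "x \<in> carrier G" "h \<in> carrier G" using assms H_car by auto
  define m where "m = meet g x"
  define hx where "hx = meet h x"
  have m: "m \<in> carrier G" "le m g" "le m x" using m_def c assms meet_le1 meet_le2 by auto
  have hx: "hx \<in> H" "hx \<in> carrier G" "le hx h" "le hx x" using hx_def H_meet assms c meet_le1 meet_le2 H_car by auto
  have "le hx g" using le_trans[of hx h g] hx assms c by auto
  then have hxm: "le hx m" unfolding m_def using hx c assms by (intro meet_glb) auto
  have qM: "inv hx \<otimes> m \<in> M" using hxm by (simp add: le_def')
  have "le (inv hx \<otimes> m) (inv hx \<otimes> x)" using le_left[of m x "inv hx"] m c hx by simp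
  moreover have "inv hx \<otimes> x \<in> N" using N3[of "inv hx \<otimes> x"] hx assms H_mult H_inv by (simp add: le_def')
  ultimately have "inv hx \<otimes> m \<in> N" using N1 qM by blast
  then have "hx \<otimes> (inv hx \<otimes> m) \<in> H" using H_mult N_H hx by auto
  then have mH: "m \<in> H" using hx m by simp
  have rN: "inv m \<otimes> x \<in> N" using N3[of "inv m \<otimes> x"] mH assms H_mult H_inv m by (simp add: le_def')
  have "le (x \<otimes> inv Dl) (g \<otimes> Dl \<otimes> inv Dl)" using RMD2 assms c by simp
  then have "le (x \<otimes> inv Dl) g" using assms by (simp add: m_assoc)
  then have "le (x \<otimes> inv Dl) m" unfolding m_def using le_mulinvM[OF c(1) Dl_M] c assms by (intro meet_glb) auto
  then have "le (x \<otimes> inv Dl \<otimes> Dl) (m \<otimes> Dl)" using RMD1 c m by simp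
  then have "le x (m \<otimes> Dl)" using c by (simp add: m_assoc)
  then have "le (inv m \<otimes> x) Dl" using le_left[of "inv m \<otimes> x" Dl m] c m by simp
  then have "inv m \<otimes> x \<in> Dd" using rN Ddef D_iff N_M by auto
  then have "dl \<otimes> inv (inv m \<otimes> x) \<in> M" using bal_R[OF bald] by auto
  then have "le (x \<otimes> inv dl) m" using c m by (simp add: le_def' inv_mult_group m_assoc)
  then show ?thesis using le_trans[of "x \<otimes> inv dl" m g] m c assms by auto
qed

lemma SLm: assumes "x \<in> H" "h \<in> H" "g \<in> carrier G" "le g h" "le (g \<otimes> inv Dl) x"
  shows "le g (x \<otimes> dl)"
proof -
  have c: "x \<in> carrier G" "h \<in> carrier G" using assms H_car by auto
  define j where "j = join g x"
  define hx where "hx = join h x"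
  have j: "j \<in> carrier G" "le g j" "le x j" using j_def c assms join_ge1 join_ge2 by auto
  have hx: "hx \<in> H" "hx \<in> carrier G" "le h hx" "le x hx" using hx_def H_join assms c join_ge1 join_ge2 H_car by auto
  have "le g hx" using le_trans[of g h hx] hx assms c by auto
  then have jhx: "le j hx" unfolding j_def using hx c assms by (intro join_lub) auto
  have qM: "inv x \<otimes> j \<in> M" using j by (simp add: le_def')
  have "le (inv x \<otimes> j) (inv x \<otimes> hx)" using le_left[of j hx "inv x"] j c hx jhx by simp
  moreover have "inv x \<otimes> hx \<in> N" using N3[of "inv x \<otimes> hx"] hx assms H_mult H_inv by (simp add: le_def')
  ultimately have qN: "inv x \<otimes> j \<in> N" using N1 qM by blast
  have "le (g \<otimes> inv Dl \<otimes> Dl) (x \<otimes> Dl)" using RMD1 c assms by simp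
  then have "le g (x \<otimes> Dl)" using assms by (simp add: m_assoc)
  then have "le j (x \<otimes> Dl)" unfolding j_def using le_mulM[OF c(1) Dl_M] c assms by (intro join_lub) auto
  then have "le (inv x \<otimes> j) Dl" using le_left[of "inv x \<otimes> j" Dl x] c j by simp
  then have "inv x \<otimes> j \<in> Dd" using qN Ddef D_iff N_M by auto
  then have "inv (inv x \<otimes> j) \<otimes> dl \<in> M" by (simp add: Div_iff)
  then have "le j (x \<otimes> dl)" using c j by (simp add: le_def' inv_mult_group m_assoc)
  then show ?thesis using le_trans j c assms by auto
qed

lemma ISLp: assumes "g \<in> carrier G" shows
  "\<forall>x. x \<in> H \<longrightarrow> le x (g \<otimes> Dl [^] (k::nat)) \<longrightarrow> (\<exists>h\<in>H. le h g) \<longrightarrow> (\<exists>x'\<in>H. le x' g \<and> le (x \<otimes> inv (Dl [^] k)) x')"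
proof (induction k)
  case 0
  then show ?case using H_car le_refl assms by auto
next
  case (Suc k)
  show ?case
  proof (intro allI impI)
    fix x assume x: "x \<in> H" "le x (g \<otimes> Dl [^] Suc k)" "\<exists>h\<in>H. le h g"
    obtain h where h: "h \<in> H" "le h g" using x by auto
    have c: "x \<in> carrier G" "h \<in> carrier G" using x h H_car by auto
    have "le h (g \<otimes> Dl [^] k)" using le_trans[of h g] h le_pow1 assms c by auto
    moreover have "le x (g \<otimes> Dl [^] k \<otimes> Dl)" using x assms by (simp add: m_assoc)
    ultimately have "le (x \<otimes> inv dl) (g \<otimes> Dl [^] k)" using SLp[OF x(1) h(1)] assms by simp
    moreover have "x \<otimes> inv dl \<in> H" using x dl_H H_mult H_inv by auto
    ultimately obtain x' where x': "x' \<in> H" "le x' g" "le (x \<otimes> inv dl \<otimes> inv (Dl [^] k)) x'"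
      using Suc x(3) by blast
    have "le (inv Dl) (inv dl)" using bal_R[OF balD dl_D] by (simp add: le_def')
    then have "le (x \<otimes> inv Dl) (x \<otimes> inv dl)" using le_left c by simp
    then have "le (x \<otimes> inv Dl \<otimes> inv (Dl [^] k)) (x \<otimes> inv dl \<otimes> inv (Dl [^] k))" using RM2 c by simp
    moreover have "x \<otimes> inv (Dl [^] Suc k) = x \<otimes> inv Dl \<otimes> inv (Dl [^] k)" using c by (simp add: inv_mult_group m_assoc)
    ultimately have "le (x \<otimes> inv (Dl [^] Suc k)) x'" using le_trans x' c H_car by auto
    then show "\<exists>x'\<in>H. le x' g \<and> le (x \<otimes> inv (Dl [^] Suc k)) x'" using x' by blast
  qed
qed

lemma ISLm: assumes "g \<in> carrier G" shows
  "\<forall>x. x \<in> H \<longrightarrow> le (g \<otimes> inv (Dl [^] (k::nat))) x \<longrightarrow> (\<exists>h\<in>H. le g h) \<longrightarrow> (\<exists>x'\<in>H. le g x' \<and> le x' (x \<otimes> Dl [^] k))"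
proof (induction k)
  case 0
  then show ?case using H_car le_refl assms by auto
next
  case (Suc k)
  show ?case
  proof (intro allI impI)
    fix x assume x: "x \<in> H" "le (g \<otimes> inv (Dl [^] Suc k)) x" "\<exists>h\<in>H. le g h"
    obtain h where h: "h \<in> H" "le g h" using x by auto
    have c: "x \<in> carrier G" "h \<in> carrier G" using x h H_car by auto
    have "le (g \<otimes> inv (Dl [^] k)) h" using le_trans[of _ g h] h le_pow2 assms c by auto
    moreover have "g \<otimes> inv (Dl [^] Suc k) = g \<otimes> inv (Dl [^] k) \<otimes> inv Dl"
      using assms powS[of Dl k] by (simp add: inv_mult_group m_assoc del: nat_pow_Suc)
    ultimately have "le (g \<otimes> inv (Dl [^] k)) (x \<otimes> dl)" using SLm[OF x(1) h(1)] assms x by simp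
    moreover have "x \<otimes> dl \<in> H" using x dl_H H_mult by auto
    ultimately obtain x' where x': "x' \<in> H" "le g x'" "le x' (x \<otimes> dl \<otimes> Dl [^] k)"
      using Suc x(3) by blast
    have "le (x \<otimes> dl) (x \<otimes> Dl)" using le_left c le_D dl_D by simp
    then have "le (x \<otimes> dl \<otimes> Dl [^] k) (x \<otimes> Dl \<otimes> Dl [^] k)" using RM1 c by simp
    moreover have "x \<otimes> Dl [^] Suc k = x \<otimes> Dl \<otimes> Dl [^] k" using c powS[of Dl k] by (simp add: m_assoc del: nat_pow_Suc)
    ultimately have "le x' (x \<otimes> Dl [^] Suc k)" using le_trans x' c H_car by auto
    then show "\<exists>x'\<in>H. le g x' \<and> le x' (x \<otimes> Dl [^] Suc k)" using x' by blast
  qed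
qed


abbreviation "S \<equiv> D - {\<one>}"
definition Wd :: "nat \<Rightarrow> 'a \<Rightarrow> bool" where
  "Wd n x \<longleftrightarrow> (\<exists>xs. length xs \<le> n \<and> set xs \<subseteq> S \<union> (\<lambda>s. inv s) ` S \<and> lprod G xs = x)"

lemma letters_car: "S \<union> (\<lambda>s. inv s) ` S \<subseteq> carrier G" using D_car by auto

lemma Wd_mult: assumes "Wd n x" "Wd m y" shows "Wd (n + m) (x \<otimes> y)"
proof -
  obtain xs ys where "length xs \<le> n" "set xs \<subseteq> S \<union> (\<lambda>s. inv s) ` S" "lprod G xs = x"
    "length ys \<le> m" "set ys \<subseteq> S \<union> (\<lambda>s. inv s) ` S" "lprod G ys = y" using assms by (auto simp: Wd_def)
  moreover have "set xs \<subseteq> carrier G" "set ys \<subseteq> carrier G" using calculation letters_car by blast+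
  ultimately show ?thesis unfolding Wd_def
    by (intro exI[of _ "xs @ ys"]) (auto simp: lprod_append)
qed
lemma Wd_mono: assumes "Wd n x" "n \<le> m" shows "Wd m x"
proof -
  obtain xs where "length xs \<le> n" "set xs \<subseteq> S \<union> (\<lambda>s. inv s) ` S" "lprod G xs = x" using assms by (auto simp: Wd_def)
  then show ?thesis unfolding Wd_def using assms(2) by (intro exI[of _ xs]) auto
qed
lemma Wd_one: "Wd 0 \<one>" unfolding Wd_def by (intro exI[of _ "[]"]) auto
lemma Wd_D: assumes "d \<in> D" shows "Wd 1 d" "Wd 1 (inv d)"
proof -
  show "Wd 1 d"
  proof (cases "d = \<one>")
    case True then show ?thesis using Wd_one Wd_mono by auto
  next
    case False then show ?thesis unfolding Wd_def using assms D_car by (intro exI[of _ "[d]"]) auto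
  qed
  show "Wd 1 (inv d)"
  proof (cases "d = \<one>")
    case True then show ?thesis using Wd_one Wd_mono by auto
  next
    case False then show ?thesis unfolding Wd_def using assms D_car by (intro exI[of _ "[inv d]"]) auto
  qed
qed
lemma Wd_exists: assumes "x \<in> carrier G" shows "\<exists>n. Wd n x"
  using assms[folded genG]
proof (induction x rule: generate.induct)
  case one then show ?case using Wd_one by auto
next
  case (incl h) then show ?case using Wd_D by auto
next
  case (inv h) then show ?case using Wd_D by auto
next
  case (eng h1 h2) then show ?case using Wd_mult by blast
qed

definition box where "box x a b \<longleftrightarrow> le (inv (Dl [^] (b::nat))) x \<and> le x (Dl [^] (a::nat))"

lemma box_mult: assumes "x \<in> carrier G" "y \<in> carrier G" "box x a b" "box y c d"
  shows "box (x \<otimes> y) (a + c) (b + d)"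
proof -
  have 1: "le (x \<otimes> y) (x \<otimes> Dl [^] c)" using assms le_left by (simp add: box_def)
  have 2: "le (x \<otimes> Dl [^] c) (Dl [^] a \<otimes> Dl [^] c)" using assms RM1 by (simp add: box_def)
  have 3: "le (x \<otimes> inv (Dl [^] d)) (x \<otimes> y)" using assms le_left by (simp add: box_def)
  have 4: "le (inv (Dl [^] b) \<otimes> inv (Dl [^] d)) (x \<otimes> inv (Dl [^] d))" using assms RM2 by (simp add: box_def)
  have e1: "Dl [^] a \<otimes> Dl [^] c = Dl [^] (a + c)" using pow_add by simp
  have e2: "inv (Dl [^] b) \<otimes> inv (Dl [^] d) = inv (Dl [^] (b + d))"
    using pow_add[of Dl d b] by (simp add: inv_mult_group add.commute)
  show ?thesis unfolding box_def using le_trans[OF 1 2] le_trans[OF 4 3] assms e1 e2 by simp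
qed

lemma box_letter: assumes "l \<in> S \<union> (\<lambda>s. inv s) ` S" shows "\<exists>a b. a + b \<le> 1 \<and> box l a b"
proof (cases "l \<in> S")
  case True
  then have "box l 1 0" unfolding box_def using D_iff D_car one_le_M by simp
  then show ?thesis by (intro exI[of _ 1] exI[of _ 0]) auto
next
  case False
  then obtain s where s: "s \<in> D" "l = inv s" using assms by auto
  have "box l 0 1" unfolding box_def using s bal_R[OF balD s(1)] D_car D_M by (simp add: le_def')
  then show ?thesis by (intro exI[of _ 0] exI[of _ 1]) auto
qed

lemma W1: "set xs \<subseteq> S \<union> (\<lambda>s. inv s) ` S \<Longrightarrow> \<exists>a b. a + b \<le> length xs \<and> box (lprod G xs) a b"
proof (induction xs)
  case Nil
  have "box \<one> 0 0" unfolding box_def using le_refl by simp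
  then show ?case by auto
next
  case (Cons l xs)
  then obtain a b where ab: "a + b \<le> length xs" "box (lprod G xs) a b" by auto
  have "l \<in> S \<union> (\<lambda>s. inv s) ` S" using Cons.prems by auto
  then obtain c d where cd: "c + d \<le> 1" "box l c d" using box_letter by blast
  have lc: "l \<in> carrier G" "lprod G xs \<in> carrier G" using Cons.prems letters_car by (auto intro!: lprod_closed)
  have "box (l \<otimes> lprod G xs) (c + a) (d + b)" using box_mult[OF lc cd(2) ab(2)] .
  then show ?case using ab cd by (intro exI[of _ "c + a"] exI[of _ "d + b"]) auto
qed

lemma conj_pow_Div: assumes "balanced G M e" "c \<in> Div G M e"
  shows "inv (e [^] (n::nat)) \<otimes> c \<otimes> e [^] n \<in> Div G M e"
  using assms(2)
proof (induction n arbitrary: c)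
  case 0
  then have "c \<in> carrier G" using Div_sub by auto
  then show ?case using 0 by simp
next
  case (Suc n)
  have c: "c \<in> carrier G" "e \<in> carrier G" using Suc Div_sub assms bal_M M_car by auto
  have 1: "inv (e [^] Suc n) \<otimes> c \<otimes> e [^] Suc n = inv (e [^] n) \<otimes> (inv e \<otimes> c \<otimes> e) \<otimes> e [^] n"
    using c powS[of e n] by (simp add: inv_mult_group m_assoc del: nat_pow_Suc)
  show ?case unfolding 1 using Suc conj1[OF assms(1) Suc.prems] by blast
qed

lemma dec: "y \<in> M \<Longrightarrow> le y (Dl [^] (n::nat)) \<Longrightarrow> \<exists>ds. length ds = n \<and> set ds \<subseteq> D \<and> lprod G ds = y"
proof (induction n arbitrary: y)
  case 0
  then have "y = \<one>" using one_le_M M_car by (intro le_antisym) auto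
  then show ?case by auto
next
  case (Suc n)
  define t where "t = meet Dl y"
  have t: "t \<in> D" "le t y" "t \<in> carrier G" using t_def meetD_D Suc meet_le2 M_car D_car by auto
  have y: "y \<in> carrier G" using Suc M_car by auto
  have "inv t \<otimes> y \<in> M" using t by (simp add: le_def')
  moreover have "le (inv t \<otimes> y) (Dl [^] n)" using LG Suc t_def by simp
  ultimately obtain ds where ds: "length ds = n" "set ds \<subseteq> D" "lprod G ds = inv t \<otimes> y" using Suc by blast
  show ?case using ds t y by (intro exI[of _ "t # ds"]) auto
qed

lemma Wd_Dlist: "set ds \<subseteq> D \<Longrightarrow> Wd (length ds) (lprod G ds)"
proof (induction ds)
  case Nil then show ?case using Wd_one by simp
next
  case (Cons d ds) then show ?case using Wd_mult[OF Wd_D(1)[of d]] by simp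
qed

lemma Pneg: "set ds \<subseteq> D \<Longrightarrow> Wd (length ds) (inv (Dl [^] (length ds)) \<otimes> lprod G ds)"
proof (induction ds)
  case Nil then show ?case using Wd_one by simp
next
  case (Cons d ds)
  let ?b = "length ds"
  have c: "d \<in> carrier G" "d \<in> D" "set ds \<subseteq> carrier G" using Cons D_car by auto
  define d' where "d' = inv d \<otimes> Dl"
  have d': "d' \<in> D" "d' \<in> carrier G" using compl1[OF balD c(2)] d'_def D_car by auto
  have cj: "inv (Dl [^] ?b) \<otimes> d' \<otimes> Dl [^] ?b \<in> D" using conj_pow_Div[OF balD d'(1)] by simp
  have e: "inv (Dl [^] Suc ?b) \<otimes> (d \<otimes> lprod G ds) = inv (inv (Dl [^] ?b) \<otimes> d' \<otimes> Dl [^] ?b) \<otimes> (inv (Dl [^] ?b) \<otimes> lprod G ds)"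
    using c powS[of Dl ?b] unfolding d'_def by (simp add: inv_mult_group m_assoc del: nat_pow_Suc)
  have "Wd (1 + ?b) (inv (inv (Dl [^] ?b) \<otimes> d' \<otimes> Dl [^] ?b) \<otimes> (inv (Dl [^] ?b) \<otimes> lprod G ds))"
    using Wd_mult[OF Wd_D(2)[OF cj]] Cons by simp
  then show ?case using e by simp
qed

lemma W2: assumes "x \<in> carrier G" "box x a b" shows "Wd (a + b) x"
proof -
  have "le (Dl [^] b \<otimes> inv (Dl [^] b)) (Dl [^] b \<otimes> x)" using assms le_left[of "inv (Dl [^] b)" x "Dl [^] b"] by (simp add: box_def)
  then have yM: "Dl [^] b \<otimes> x \<in> M" using assms by (simp add: le_one_iff)
  have "le (Dl [^] b \<otimes> x) (Dl [^] b \<otimes> Dl [^] a)" using assms le_left by (simp add: box_def)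
  then have "le (Dl [^] b \<otimes> x) (Dl [^] (b + a))" using pow_add by simp
  then obtain ds where ds: "length ds = b + a" "set ds \<subseteq> D" "lprod G ds = Dl [^] b \<otimes> x" using dec yM by blast
  have sub: "set (take b ds) \<subseteq> D" "set (drop b ds) \<subseteq> D" using ds set_take_subset set_drop_subset by fastforce+
  have lens: "length (take b ds) = b" "length (drop b ds) = a" using ds by auto
  have "x = inv (Dl [^] b) \<otimes> lprod G ds" using ds assms by simp
  also have "\<dots> = (inv (Dl [^] b) \<otimes> lprod G (take b ds)) \<otimes> lprod G (drop b ds)"
  proof -
    have sc: "set (take b ds) \<subseteq> carrier G" "set (drop b ds) \<subseteq> carrier G" using sub D_car by auto
    then have "lprod G ds = lprod G (take b ds) \<otimes> lprod G (drop b ds)" using lprod_append[OF sc] by simp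
    then show ?thesis using sc by (simp add: m_assoc)
  qed
  finally have xe: "x = (inv (Dl [^] b) \<otimes> lprod G (take b ds)) \<otimes> lprod G (drop b ds)" .
  have "Wd (b + a) x" using Wd_mult[OF Pneg[OF sub(1)] Wd_Dlist[OF sub(2)]] lens xe by simp
  then show ?thesis by (simp add: add.commute)
qed

lemma wlen_le: assumes "Wd n x" shows "wlen G S x \<le> n"
proof -
  obtain xs where xs: "length xs \<le> n" "set xs \<subseteq> S \<union> (\<lambda>s. inv s) ` S" "lprod G xs = x" using assms by (auto simp: Wd_def)
  have "wlen G S x \<le> length xs" unfolding wlen_def using xs by (intro Least_le) auto
  then show ?thesis using xs by simp
qed
lemma wlen_Wd: assumes "x \<in> carrier G" shows "Wd (wlen G S x) x"
proof -
  obtain n where "Wd n x" using Wd_exists assms by auto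
  then obtain xs where "set xs \<subseteq> S \<union> (\<lambda>s. inv s) ` S" "lprod G xs = x" by (auto simp: Wd_def)
  then have "\<exists>n xs. length xs = n \<and> set xs \<subseteq> S \<union> (\<lambda>s. inv s) ` S \<and> lprod G xs = x" by auto
  then have "\<exists>xs. length xs = wlen G S x \<and> set xs \<subseteq> S \<union> (\<lambda>s. inv s) ` S \<and> lprod G xs = x"
    unfolding wlen_def by (rule LeastI_ex)
  then obtain xs where "length xs = wlen G S x" "set xs \<subseteq> S \<union> (\<lambda>s. inv s) ` S" "lprod G xs = x" by blast
  then show ?thesis unfolding Wd_def by (intro exI[of _ xs]) auto
qed

lemma dist_box: assumes "\<alpha> \<in> carrier G" "\<beta> \<in> carrier G" "wdist G S \<alpha> \<beta> \<le> n"
  shows "\<exists>a b. a + b \<le> n \<and> le (\<alpha> \<otimes> inv (Dl [^] b)) \<beta> \<and> le \<beta> (\<alpha> \<otimes> Dl [^] a)"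
proof -
  let ?x = "inv \<alpha> \<otimes> \<beta>"
  have xc: "?x \<in> carrier G" using assms by simp
  obtain xs where xs: "length xs \<le> wlen G S ?x" "set xs \<subseteq> S \<union> (\<lambda>s. inv s) ` S" "lprod G xs = ?x"
    using wlen_Wd[OF xc] by (auto simp: Wd_def)
  obtain a b where ab: "a + b \<le> length xs" "box ?x a b" using W1[OF xs(2)] xs(3) by auto
  have "le (\<alpha> \<otimes> inv (Dl [^] b)) (\<alpha> \<otimes> ?x)" using ab le_left[of "inv (Dl [^] b)" ?x \<alpha>] assms by (simp add: box_def)
  moreover have "le (\<alpha> \<otimes> ?x) (\<alpha> \<otimes> Dl [^] a)" using ab le_left[of ?x "Dl [^] a" \<alpha>] assms by (simp add: box_def)
  moreover have "a + b \<le> n" using ab xs assms unfolding wdist_def by simp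
  ultimately show ?thesis using assms by auto
qed

lemma box_dist: assumes "\<alpha> \<in> carrier G" "\<beta> \<in> carrier G" "le (\<alpha> \<otimes> inv (Dl [^] b)) \<beta>" "le \<beta> (\<alpha> \<otimes> Dl [^] a)"
  shows "wdist G S \<alpha> \<beta> \<le> a + b"
proof -
  let ?x = "inv \<alpha> \<otimes> \<beta>"
  have xc: "?x \<in> carrier G" using assms by simp
  have "le (inv (Dl [^] b)) ?x" using le_left[of "inv (Dl [^] b)" ?x \<alpha>] assms by (simp add: m_assoc[symmetric])
  moreover have "le ?x (Dl [^] a)" using le_left[of ?x "Dl [^] a" \<alpha>] assms by (simp add: m_assoc[symmetric])
  ultimately have "box ?x a b" by (simp add: box_def)
  then show ?thesis using W2 xc wlen_le unfolding wdist_def by blast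
qed

lemma sd_le: "h \<in> H \<Longrightarrow> setdist G S \<alpha> H \<le> wdist G S \<alpha> h"
  unfolding setdist_def by (rule Least_le) auto
lemma sd_ex: "\<exists>h\<in>H. wdist G S \<alpha> h = setdist G S \<alpha> H"
proof -
  have "\<exists>n. \<exists>b\<in>H. wdist G S \<alpha> b = n" using H_one by auto
  then show ?thesis unfolding setdist_def by (rule LeastI_ex)
qed
lemma proj_mem: "h \<in> H \<Longrightarrow> wdist G S \<alpha> h \<le> setdist G S \<alpha> H \<Longrightarrow> h \<in> proj G S H \<alpha>"
  using sd_le[of h \<alpha>] unfolding proj_def by auto


lemma pw1: "x \<in> carrier G \<Longrightarrow> x \<otimes> Dl [^] (m::nat) \<otimes> Dl [^] (n::nat) = x \<otimes> Dl [^] (m + n)"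
  by (simp add: pow_add m_assoc)
lemma pw2: "x \<in> carrier G \<Longrightarrow> x \<otimes> inv (Dl [^] (m::nat)) \<otimes> inv (Dl [^] (n::nat)) = x \<otimes> inv (Dl [^] (m + n))"
  using pow_add[of Dl n m] by (simp add: m_assoc inv_mult_group add.commute)
lemma bm1: assumes "x \<in> carrier G" "(k::nat) \<le> l" shows "le (x \<otimes> Dl [^] k) (x \<otimes> Dl [^] l)"
proof -
  have "x \<otimes> Dl [^] l = x \<otimes> Dl [^] k \<otimes> Dl [^] (l - k)" using pw1 assms by simp
  then show ?thesis using le_pow1[of "x \<otimes> Dl [^] k" "l - k"] assms by simp
qed
lemma bm2: assumes "x \<in> carrier G" "(k::nat) \<le> l" shows "le (x \<otimes> inv (Dl [^] l)) (x \<otimes> inv (Dl [^] k))"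
proof -
  have "x \<otimes> inv (Dl [^] l) = x \<otimes> inv (Dl [^] k) \<otimes> inv (Dl [^] (l - k))" using pw2 assms by simp
  then show ?thesis using le_pow2[of "x \<otimes> inv (Dl [^] k)" "l - k"] assms by simp
qed

lemma fellow: assumes a1: "\<alpha>1 \<in> carrier G" and a2: "\<alpha>2 \<in> carrier G" and d12: "wdist G S \<alpha>1 \<alpha>2 = 1"
  and b1: "\<beta>1 \<in> proj G S H \<alpha>1"
  shows "\<exists>\<beta>2\<in>proj G S H \<alpha>2. wdist G S \<beta>1 \<beta>2 \<le> 5"
proof -
  define r where "r = setdist G S \<alpha>1 H"
  define r' where "r' = setdist G S \<alpha>2 H"
  have b1H: "\<beta>1 \<in> H" and b1d: "wdist G S \<alpha>1 \<beta>1 = r" using b1 unfolding proj_def r_def by auto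
  have b1c: "\<beta>1 \<in> carrier G" using b1H H_car by auto
  obtain a0 b0 :: nat where ab0: "a0 + b0 \<le> 1" "le (\<alpha>1 \<otimes> inv (Dl [^] b0)) \<alpha>2" "le \<alpha>2 (\<alpha>1 \<otimes> Dl [^] a0)"
    using dist_box[OF a1 a2, of 1] d12 by auto
  have r12: "le \<alpha>1 (\<alpha>2 \<otimes> Dl [^] b0)" using RM1[OF _ a2 ab0(2), of b0] a1 by (simp add: m_assoc)
  have r21: "le (\<alpha>2 \<otimes> inv (Dl [^] a0)) \<alpha>1" using RM2[OF a2 _ ab0(3), of a0] a1 by (simp add: m_assoc)
  obtain u1 v1 :: nat where ab1: "u1 + v1 \<le> r" "le (\<alpha>1 \<otimes> inv (Dl [^] v1)) \<beta>1" "le \<beta>1 (\<alpha>1 \<otimes> Dl [^] u1)"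
    using dist_box[OF a1 b1c, of r] b1d by auto
  define A where "A = b0 + u1"
  define B where "B = a0 + v1"
  have bA: "le \<beta>1 (\<alpha>2 \<otimes> Dl [^] A)"
  proof -
    have 1: "le (\<alpha>1 \<otimes> Dl [^] u1) (\<alpha>2 \<otimes> Dl [^] b0 \<otimes> Dl [^] u1)" using RM1[OF a1 _ r12, of u1] a2 by simp
    have "le \<beta>1 (\<alpha>2 \<otimes> Dl [^] b0 \<otimes> Dl [^] u1)" using le_trans[OF ab1(3) 1] a1 a2 b1c by simp
    then show ?thesis using pw1[OF a2, of b0 u1] unfolding A_def by simp
  qed
  have bB: "le (\<alpha>2 \<otimes> inv (Dl [^] B)) \<beta>1"
  proof -
    have 1: "le (\<alpha>2 \<otimes> inv (Dl [^] a0) \<otimes> inv (Dl [^] v1)) (\<alpha>1 \<otimes> inv (Dl [^] v1))" using RM2[OF _ a1 r21, of v1] a2 by simp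
    have "le (\<alpha>2 \<otimes> inv (Dl [^] a0) \<otimes> inv (Dl [^] v1)) \<beta>1" using le_trans[OF 1 ab1(2)] a1 a2 b1c by simp
    then show ?thesis using pw2[OF a2, of a0 v1] unfolding B_def by simp
  qed
  have r'AB: "r' \<le> A + B" using box_dist[OF a2 b1c bB bA] sd_le[OF b1H, of \<alpha>2] unfolding r'_def by simp
  obtain hs where hs: "hs \<in> H" "wdist G S \<alpha>2 hs = r'" using sd_ex unfolding r'_def by blast
  have hsc: "hs \<in> carrier G" using hs H_car by auto
  obtain as bs :: nat where abs: "as + bs \<le> r'" "le (\<alpha>2 \<otimes> inv (Dl [^] bs)) hs" "le hs (\<alpha>2 \<otimes> Dl [^] as)"
    using dist_box[OF a2 hsc, of r'] hs by auto
  have "r \<le> r' + 1"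
  proof -
    have 1: "le (\<alpha>2 \<otimes> Dl [^] as) (\<alpha>1 \<otimes> Dl [^] a0 \<otimes> Dl [^] as)" using RM1[OF a2 _ ab0(3), of as] a1 by simp
    have "le hs (\<alpha>1 \<otimes> Dl [^] a0 \<otimes> Dl [^] as)" using le_trans[OF abs(3) 1] a1 a2 hsc by simp
    then have u: "le hs (\<alpha>1 \<otimes> Dl [^] (a0 + as))" using pw1[OF a1, of a0 as] by simp
    have 2: "le (\<alpha>1 \<otimes> inv (Dl [^] b0) \<otimes> inv (Dl [^] bs)) (\<alpha>2 \<otimes> inv (Dl [^] bs))" using RM2[OF _ a2 ab0(2), of bs] a1 by simp
    have "le (\<alpha>1 \<otimes> inv (Dl [^] b0) \<otimes> inv (Dl [^] bs)) hs" using le_trans[OF 2 abs(2)] a1 a2 hsc by simp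
    then have l: "le (\<alpha>1 \<otimes> inv (Dl [^] (b0 + bs))) hs" using pw2[OF a1, of b0 bs] by simp
    have "wdist G S \<alpha>1 hs \<le> (a0 + as) + (b0 + bs)" using box_dist[OF a1 hsc l u] .
    then show ?thesis using sd_le[OF hs(1), of \<alpha>1] abs ab0 unfolding r_def by simp
  qed
  have ABr: "A + B \<le> r' + 2" using ab0 ab1 \<open>r \<le> r' + 1\<close> unfolding A_def B_def by simp
  have gA: "\<exists>h\<in>H. le h (\<alpha>2 \<otimes> Dl [^] A)" using bA b1H by blast
  have gB: "\<exists>h\<in>H. le (\<alpha>2 \<otimes> inv (Dl [^] B)) h" using bB b1H by blast
  obtain z and a' b' :: nat where z: "z \<in> H" "le (\<alpha>2 \<otimes> inv (Dl [^] b')) z" "le z (\<alpha>2 \<otimes> Dl [^] a')"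
    "a' \<le> A" "b' \<le> B" "a' + b' = r'"
  proof (cases "as \<le> A \<and> bs \<le> B")
    case True
    define a' where "a' = min A (r' - bs)"
    define b' where "b' = r' - a'"
    have ab': "as \<le> a'" "bs \<le> b'" "a' \<le> A" "b' \<le> B" "a' + b' = r'"
      using True abs r'AB unfolding a'_def b'_def by auto
    have "le (\<alpha>2 \<otimes> inv (Dl [^] b')) hs" using le_trans[OF bm2[OF a2 ab'(2)] abs(2)] a2 hsc by simp
    moreover have "le hs (\<alpha>2 \<otimes> Dl [^] a')" using le_trans[OF abs(3) bm1[OF a2 ab'(1)]] a2 hsc by simp
    ultimately show ?thesis using that[of hs b' a'] hs ab' by blast
  next
    case False
    then consider "A < as" | "B < bs" by linarith
    then show ?thesis
    proof cases
      case 1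
      define k where "k = as - A"
      have "le hs (\<alpha>2 \<otimes> Dl [^] A \<otimes> Dl [^] k)" using abs pw1 a2 1 unfolding k_def by simp
      then obtain x' where x': "x' \<in> H" "le x' (\<alpha>2 \<otimes> Dl [^] A)" "le (hs \<otimes> inv (Dl [^] k)) x'"
        using ISLp[of "\<alpha>2 \<otimes> Dl [^] A" k] a2 hs gA by auto
      have x'c: "x' \<in> carrier G" using x' H_car by auto
      have 3: "le (\<alpha>2 \<otimes> inv (Dl [^] bs) \<otimes> inv (Dl [^] k)) (hs \<otimes> inv (Dl [^] k))" using RM2[OF _ hsc abs(2), of k] a2 by simp
      have "le (\<alpha>2 \<otimes> inv (Dl [^] bs) \<otimes> inv (Dl [^] k)) x'" using le_trans[OF 3 x'(3)] a2 hsc x'c by simp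
      then have l: "le (\<alpha>2 \<otimes> inv (Dl [^] (bs + k))) x'" using pw2[OF a2, of bs k] by simp
      have bk: "bs + k \<le> r' - A" "r' - A \<le> B" using abs 1 r'AB unfolding k_def by auto
      then have "le (\<alpha>2 \<otimes> inv (Dl [^] (r' - A))) x'" using le_trans[OF bm2[OF a2 bk(1)] l] a2 x'c by simp
      moreover have "A + (r' - A) = r'" using abs 1 by simp
      ultimately show ?thesis using that[of x' "r' - A" A] x' \<open>r' - A \<le> B\<close> by auto
    next
      case 2
      define k where "k = bs - B"
      have "le (\<alpha>2 \<otimes> inv (Dl [^] B) \<otimes> inv (Dl [^] k)) hs" using abs pw2 a2 2 unfolding k_def by simp
      then obtain x' where x': "x' \<in> H" "le (\<alpha>2 \<otimes> inv (Dl [^] B)) x'" "le x' (hs \<otimes> Dl [^] k)"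
        using ISLm[of "\<alpha>2 \<otimes> inv (Dl [^] B)" k] a2 hs gB by auto
      have x'c: "x' \<in> carrier G" using x' H_car by auto
      have 3: "le (hs \<otimes> Dl [^] k) (\<alpha>2 \<otimes> Dl [^] as \<otimes> Dl [^] k)" using RM1[OF hsc _ abs(3), of k] a2 by simp
      have "le x' (\<alpha>2 \<otimes> Dl [^] as \<otimes> Dl [^] k)" using le_trans[OF x'(3) 3] a2 hsc x'c by simp
      then have u: "le x' (\<alpha>2 \<otimes> Dl [^] (as + k))" using pw1[OF a2, of as k] by simp
      have bk: "as + k \<le> r' - B" "r' - B \<le> A" using abs 2 r'AB unfolding k_def by auto
      then have "le x' (\<alpha>2 \<otimes> Dl [^] (r' - B))" using le_trans[OF u bm1[OF a2 bk(1)]] a2 x'c by simp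
      moreover have "(r' - B) + B = r'" using abs 2 by simp
      ultimately show ?thesis using that[of x' B "r' - B"] x' \<open>r' - B \<le> A\<close> by auto
    qed
  qed
  have zc: "z \<in> carrier G" using z H_car by auto
  define p where "p = A - a'"
  define q where "q = B - b'"
  have "le \<beta>1 (\<alpha>2 \<otimes> Dl [^] a' \<otimes> Dl [^] p)" using bA pw1 a2 z(4) unfolding p_def by simp
  then obtain xu where xu: "xu \<in> H" "le xu (\<alpha>2 \<otimes> Dl [^] a')" "le (\<beta>1 \<otimes> inv (Dl [^] p)) xu"
    using ISLp[of "\<alpha>2 \<otimes> Dl [^] a'" p] a2 b1H z by auto
  have "le (\<alpha>2 \<otimes> inv (Dl [^] b') \<otimes> inv (Dl [^] q)) \<beta>1" using bB pw2 a2 z(5) unfolding q_def by simp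
  then obtain xl where xl: "xl \<in> H" "le (\<alpha>2 \<otimes> inv (Dl [^] b')) xl" "le xl (\<beta>1 \<otimes> Dl [^] q)"
    using ISLm[of "\<alpha>2 \<otimes> inv (Dl [^] b')" q] a2 b1H z by auto
  have xc: "xu \<in> carrier G" "xl \<in> carrier G" using xu xl H_car by auto
  define L where "L = meet xl z"
  define U where "U = join xu z"
  define \<beta>2 where "\<beta>2 = meet (join \<beta>1 L) U"
  have LU: "L \<in> H" "U \<in> H" "L \<in> carrier G" "U \<in> carrier G" using H_meet H_join xu xl z L_def U_def H_car by auto
  have b2H: "\<beta>2 \<in> H" using H_meet H_join LU b1H \<beta>2_def by auto
  have b2c: "\<beta>2 \<in> carrier G" using b2H H_car by auto
  have jc: "join \<beta>1 L \<in> carrier G" using LU b1c by auto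
  have lo2: "le (\<alpha>2 \<otimes> inv (Dl [^] b')) \<beta>2"
  proof -
    have c: "\<alpha>2 \<otimes> inv (Dl [^] b') \<in> carrier G" using a2 by simp
    have "le (\<alpha>2 \<otimes> inv (Dl [^] b')) L" unfolding L_def using xl z c zc xc by (intro meet_glb) auto
    moreover have "le L \<beta>2" unfolding \<beta>2_def
    proof (rule meet_glb)
      show "le L (join \<beta>1 L)" using join_ge2 b1c LU by auto
      have Lz: "le L z" unfolding L_def using meet_le2 xc zc by auto
      have zU: "le z U" unfolding U_def using join_ge2 xc zc by auto
      show "le L U" using le_trans[OF Lz zU] LU zc by auto
    qed (use LU jc in auto)
    ultimately show ?thesis using le_trans[of _ L \<beta>2] c LU b2c by blast
  qed
  have up2: "le \<beta>2 (\<alpha>2 \<otimes> Dl [^] a')"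
  proof -
    have c: "\<alpha>2 \<otimes> Dl [^] a' \<in> carrier G" using a2 by simp
    have "le U (\<alpha>2 \<otimes> Dl [^] a')" unfolding U_def using xu z c zc xc by (intro join_lub) auto
    moreover have "le \<beta>2 U" unfolding \<beta>2_def using meet_le2 jc LU by auto
    ultimately show ?thesis using le_trans[of \<beta>2 U] c LU b2c by blast
  qed
  have "wdist G S \<alpha>2 \<beta>2 \<le> a' + b'" using box_dist[OF a2 b2c lo2 up2] .
  then have b2p: "\<beta>2 \<in> proj G S H \<alpha>2" using proj_mem[OF b2H] z(6) unfolding r'_def by simp
  have d_up: "le \<beta>2 (\<beta>1 \<otimes> Dl [^] q)"
  proof -
    have c: "\<beta>1 \<otimes> Dl [^] q \<in> carrier G" using b1c by simp
    have "le L xl" unfolding L_def using meet_le1 xc zc by auto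
    then have "le L (\<beta>1 \<otimes> Dl [^] q)" using le_trans[OF _ xl(3)] LU xc c by blast
    then have "le (join \<beta>1 L) (\<beta>1 \<otimes> Dl [^] q)" using le_pow1 b1c LU c by (intro join_lub) auto
    moreover have "le \<beta>2 (join \<beta>1 L)" unfolding \<beta>2_def using meet_le1 jc LU by auto
    ultimately show ?thesis using le_trans[of \<beta>2 "join \<beta>1 L"] c jc b2c by blast
  qed
  have d_lo: "le (\<beta>1 \<otimes> inv (Dl [^] p)) \<beta>2"
  proof -
    have c: "\<beta>1 \<otimes> inv (Dl [^] p) \<in> carrier G" using b1c by simp
    show ?thesis unfolding \<beta>2_def
    proof (rule meet_glb)
      have "le \<beta>1 (join \<beta>1 L)" using join_ge1 b1c LU by auto
      then show "le (\<beta>1 \<otimes> inv (Dl [^] p)) (join \<beta>1 L)" using le_trans[OF le_pow2[OF b1c, of p]] b1c c jc by blast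
      have "le xu U" unfolding U_def using join_ge1 xc zc by auto
      then show "le (\<beta>1 \<otimes> inv (Dl [^] p)) U" using le_trans[OF xu(3)] c xc LU by blast
    qed (use c jc LU in auto)
  qed
  have "wdist G S \<beta>1 \<beta>2 \<le> q + p" using box_dist[OF b1c b2c d_lo d_up] .
  moreover have "q + p \<le> 5" using ABr z unfolding p_def q_def by simp
  ultimately have "wdist G S \<beta>1 \<beta>2 \<le> 5" by linarith
  then show ?thesis using b2p by blast
qed

end

theorem theorem5p5:
  fixes G :: "('a, 'b) monoid_scheme"
  assumes "garside_structure G M \<Delta>"
    and "parabolic_substructure G M \<Delta> H N \<delta>"
    and "H \<noteq> {\<one>\<^bsub>G\<^esub>}"
    and "S = Div G M \<Delta> - {\<one>\<^bsub>G\<^esub>}"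
  shows "\<forall>\<alpha>1\<in>carrier G. \<forall>\<alpha>2\<in>carrier G. wdist G S \<alpha>1 \<alpha>2 = 1 \<longrightarrow>
           (\<forall>\<beta>1\<in>proj G S H \<alpha>1. \<exists>\<beta>2\<in>proj G S H \<alpha>2. wdist G S \<beta>1 \<beta>2 \<le> 5)"
proof -
  have gs: "group G" "pointed_submonoid G M" "balanced G M \<Delta>" "mon_gen G (Div G M \<Delta>) = M"
    "generate G (Div G M \<Delta>) = carrier G" "leL_lattice G M"
    using assms(1) unfolding garside_structure_def by blast+
  have ps: "balanced G M \<delta>" "H = generate G (Div G M \<delta>)" "N = mon_gen G (Div G M \<delta>)"
    "Div G M \<delta> = Div G M \<Delta> \<inter> N"
    using assms(2) unfolding parabolic_substructure_def by blast+
  interpret gctx G M \<Delta> H N \<delta>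
    using gs ps by (intro gctx.intro gctx_axioms.intro) assumption+
  show ?thesis using fellow assms(4) by blast
qed

end
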